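(* Let $n\in\mathbb{N}$. Every edge of $\Gamma_0(n)\cdot I$ is an edge of both $\mathcal{F}$ and $\frac1n\mathcal{F}$. Moreover, the set of edges $\Gamma_0(n)\cdot I$ equals the set of edges common to $\mathcal{F}$ and $\frac1n\mathcal{F}$ if and only if $n$ is a prime power.
   Context: The Farey tessellation $\mathcal{F}$ is the ideal triangulation of the upper half-plane with vertex set $\mathbb{Q}\cup\{\infty\}$ ($\infty=\frac10$) whose edges are the geodesics joining reduced fractions $\frac pq,\frac rs$ with $|ps-qr|=1$. $\frac1n\mathcal{F}$ is the image of $\mathcal{F}$ under $z\mapsto z/n$. $I$ is the geodesic from $0$ to $\infty$, $\Gamma_0(n)=\{\begin{pmatrix}a&b\\c&d\end{pmatrix}\in PSL_2(\mathbb{Z}): c\equiv0\pmod n\}$ acting by Möbius transformations, and $\Gamma_0(n)\cdot I=\{\phi(I):\phi\in\Gamma_0(n)\}$. (Prime powers include $n=p^\ell$ with $\ell\ge0$.) *)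

theory Defs
  imports Complex_Main "HOL-Computational_Algebra.Primes"
begin

text \<open>Points of Q \<union> {\<infinity>} are modelled as rat option: None = \<infinity> = 1/0, Some r = r.\<close>

definition frac :: "rat option \<Rightarrow> int \<times> int" where
  "frac x = (case x of None \<Rightarrow> (1, 0) | Some r \<Rightarrow> quotient_of r)"

definition farey_adj :: "rat option \<Rightarrow> rat option \<Rightarrow> bool" where
  "farey_adj x y = (let (p, q) = frac x; (r, s) = frac y in \<bar>p * s - q * r\<bar> = 1)"

definition farey_edges :: "rat option set set" where
  "farey_edges = {{x, y} | x y. farey_adj x y}"

definition scale :: "nat \<Rightarrow> rat option \<Rightarrow> rat option" where
  "scale n x = map_option (\<lambda>r. r / of_nat n) x"

definition scaled_farey_edges :: "nat \<Rightarrow> rat option set set" where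
  "scaled_farey_edges n = (\<lambda>e. scale n ` e) ` farey_edges"

definition moebius :: "int \<Rightarrow> int \<Rightarrow> int \<Rightarrow> int \<Rightarrow> rat option \<Rightarrow> rat option" where
  "moebius a b c d x = (case x of
      None \<Rightarrow> (if c = 0 then None else Some (of_int a / of_int c))
    | Some r \<Rightarrow> (if of_int c * r + of_int d = 0 then None
                 else Some ((of_int a * r + of_int b) / (of_int c * r + of_int d))))"

text \<open>Gamma_0(n): integer matrices of determinant 1 with n dividing c
  (matrices and their negatives act identically, so this gives the PSL_2 action).\<close>
definition Gamma0 :: "nat \<Rightarrow> (int \<times> int \<times> int \<times> int) set" where
  "Gamma0 n = {(a, b, c, d). a * d - b * c = 1 \<and> int n dvd c}"

text \<open>I is the geodesic from 0 to \<infinity>, i.e. the edge {0, \<infinity>}; its orbit under Gamma_0(n).\<close>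
definition I_edge :: "rat option set" where
  "I_edge = {Some 0, None}"

definition Gamma0_orbit_I :: "nat \<Rightarrow> rat option set set" where
  "Gamma0_orbit_I n = {moebius a b c d ` I_edge | a b c d. (a, b, c, d) \<in> Gamma0 n}"

end

theory Submission
  imports Defs
begin


definition pt :: "int \<Rightarrow> int \<Rightarrow> rat option" where
  "pt p q = (if q = 0 then None else Some (of_int p / of_int q))"

definition mul :: "nat \<Rightarrow> rat option \<Rightarrow> rat option" where
  "mul n x = map_option (\<lambda>r. r * of_nat n) x"

lemma pt_frac: "pt (fst (frac x)) (snd (frac x)) = x"
proof (cases x)
  case None then show ?thesis by (simp add: pt_def frac_def)
next
  case (Some r)
  obtain p q where pq: "quotient_of r = (p,q)" by (cases "quotient_of r")
  have "q > 0" using quotient_of_denom_pos[OF pq] .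
  then show ?thesis using Some pq quotient_of_div[OF pq] by (simp add: pt_def frac_def)
qed

lemma coprime_frac: "coprime (fst (frac x)) (snd (frac x))"
proof (cases x)
  case None then show ?thesis by (simp add: frac_def)
next
  case (Some r)
  obtain p q where pq: "quotient_of r = (p,q)" by (cases "quotient_of r")
  then show ?thesis using Some quotient_of_coprime[OF pq] by (simp add: frac_def)
qed

lemma pt_scale: "k \<noteq> 0 \<Longrightarrow> pt (k*p) (k*q) = pt p q"
  by (simp add: pt_def)

lemma quot_pos: "coprime p q \<Longrightarrow> q > 0 \<Longrightarrow> quotient_of (of_int p / of_int q) = (p, q)"
  by (metis Fract_of_int_quotient normalize_stable quotient_of_Fract)

lemma frac_pt: assumes "coprime p q"
  shows "frac (pt p q) = (p,q) \<or> frac (pt p q) = (-p,-q)"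
proof -
  consider "q = 0" | "q > 0" | "q < 0" by linarith
  then show ?thesis
  proof cases
    case 1
    then have "is_unit p" using assms by simp
    then have "p = 1 \<or> p = -1" by auto
    then show ?thesis using 1 by (auto simp: pt_def frac_def)
  next
    case 2
    then show ?thesis using quot_pos[OF assms 2] by (simp add: pt_def frac_def)
  next
    case 3
    have c: "coprime (-p) (-q)" using assms by simp
    have "of_int p / of_int q = (of_int (-p) / of_int (-q) :: rat)" by simp
    then show ?thesis using quot_pos[OF c] 3 by (simp add: pt_def frac_def)
  qed
qed


lemma frac_rep:
  assumes "P \<noteq> 0 \<or> Q \<noteq> 0"
  shows "\<exists>k. k \<noteq> 0 \<and> \<bar>k\<bar> = gcd P Q \<and> P = k * fst (frac (pt P Q)) \<and> Q = k * snd (frac (pt P Q))"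
proof -
  define g where "g = gcd P Q"
  have g0: "g > 0" using assms by (auto simp: g_def)
  define p0 where "p0 = P div g"
  define q0 where "q0 = Q div g"
  have P: "P = g * p0" and Q: "Q = g * q0" unfolding p0_def q0_def g_def by simp_all
  have cop: "coprime p0 q0" unfolding p0_def q0_def g_def using div_gcd_coprime assms by blast
  have e: "pt P Q = pt p0 q0" using P Q g0 pt_scale by simp
  have ga: "\<bar>g\<bar> = gcd P Q" "\<bar>-g\<bar> = gcd P Q" using g0 g_def by auto
  from frac_pt[OF cop] show ?thesis
  proof
    assume h: "frac (pt p0 q0) = (p0,q0)"
    show ?thesis using e h P Q g0 ga by (intro exI[of _ g]) simp
  next
    assume h: "frac (pt p0 q0) = (-p0,-q0)"
    show ?thesis using e h P Q g0 ga by (intro exI[of _ "-g"]) simp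
  qed
qed

lemma adj_pt:
  assumes "P \<noteq> 0 \<or> Q \<noteq> 0" "R \<noteq> 0 \<or> S \<noteq> 0"
  shows "farey_adj (pt P Q) (pt R S) \<longleftrightarrow> \<bar>P*S - Q*R\<bar> = gcd P Q * gcd R S"
proof -
  obtain k where k: "k \<noteq> 0" "\<bar>k\<bar> = gcd P Q" "P = k * fst (frac (pt P Q))" "Q = k * snd (frac (pt P Q))"
    using frac_rep[OF assms(1)] by blast
  obtain l where l: "l \<noteq> 0" "\<bar>l\<bar> = gcd R S" "R = l * fst (frac (pt R S))" "S = l * snd (frac (pt R S))"
    using frac_rep[OF assms(2)] by blast
  obtain p q where pq: "frac (pt P Q) = (p,q)" by (cases "frac (pt P Q)")
  obtain r s where rs: "frac (pt R S) = (r,s)" by (cases "frac (pt R S)")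
  have "P*S - Q*R = (k*l) * (p*s - q*r)" using k l pq rs by (simp add: algebra_simps)
  then have "\<bar>P*S - Q*R\<bar> = (gcd P Q * gcd R S) * \<bar>p*s - q*r\<bar>"
    using k(2) l(2) by (simp add: abs_mult)
  moreover have "gcd P Q * gcd R S > 0" using k l by (metis zero_less_abs_iff mult_pos_pos)
  ultimately show ?thesis using pq rs assms by (auto simp add: farey_adj_def)
qed

lemma adj_sym: "farey_adj x y \<Longrightarrow> farey_adj y x"
  unfolding farey_adj_def by (auto split: prod.splits simp: abs_minus_commute mult.commute)

lemma edge_iff: "{x,y} \<in> farey_edges \<longleftrightarrow> farey_adj x y"
proof
  assume "{x,y} \<in> farey_edges"
  then obtain x' y' where e: "{x,y} = {x',y'}" "farey_adj x' y'" by (auto simp: farey_edges_def)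
  from e(1) have "(x = x' \<and> y = y') \<or> (x = y' \<and> y = x')" by (auto simp: doubleton_eq_iff)
  then show "farey_adj x y" using e(2) adj_sym by auto
qed (auto simp: farey_edges_def)

lemma scaled_iff:
  assumes "n \<ge> 1"
  shows "e \<in> scaled_farey_edges n \<longleftrightarrow> mul n ` e \<in> farey_edges"
proof -
  have ms: "mul n (scale n x) = x" for x using assms
    by (cases x) (auto simp: mul_def scale_def)
  have sm: "scale n (mul n x) = x" for x using assms
    by (cases x) (auto simp: mul_def scale_def)
  show ?thesis
  proof
    assume "e \<in> scaled_farey_edges n"
    then obtain f where "f \<in> farey_edges" "e = scale n ` f" by (auto simp: scaled_farey_edges_def)
    moreover have "mul n ` scale n ` f = f" using ms by (simp add: image_image)
    ultimately show "mul n ` e \<in> farey_edges" by simp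
  next
    assume "mul n ` e \<in> farey_edges"
    moreover have "scale n ` mul n ` e = e" using sm by (simp add: image_image)
    ultimately show "e \<in> scaled_farey_edges n" unfolding scaled_farey_edges_def by (metis image_eqI)
  qed
qed

lemma mul_pt: "n \<ge> 1 \<Longrightarrow> mul n (pt p q) = pt (int n * p) q"
  by (simp add: mul_def pt_def)

lemma moeb0: "moebius a b c d (Some 0) = pt b d"
  by (simp add: moebius_def pt_def)
lemma moebInf: "moebius a b c d None = pt a c"
  by (simp add: moebius_def pt_def)

lemma orbit_iff: "e \<in> Gamma0_orbit_I n \<longleftrightarrow>
   (\<exists>a b c d. a*d - b*c = 1 \<and> int n dvd c \<and> e = {pt b d, pt a c})"
  by (auto simp: Gamma0_orbit_I_def Gamma0_def I_edge_def moeb0 moebInf)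

lemma det_cop:
  fixes a b c d :: int
  assumes "\<bar>a*d - b*c\<bar> = 1"
  shows "coprime a c \<and> coprime b d \<and> coprime c d \<and> coprime a b"
proof -
  have h: "x dvd 1" if "x dvd a*d - b*c" for x using assms that
    by (metis dvd_abs_iff)
  show ?thesis
    by (intro conjI; rule coprimeI; rule h; simp)
qed



lemma nz_cop: "coprime (P::int) Q \<Longrightarrow> P \<noteq> 0 \<or> Q \<noteq> 0"
  by auto

lemma pt_uniq: assumes "coprime P Q" "coprime P' Q'" "pt P Q = pt P' Q'" shows "\<bar>Q\<bar> = \<bar>Q'\<bar>"
proof -
  have a: "\<bar>snd (frac (pt P Q))\<bar> = \<bar>Q\<bar>" using frac_pt[OF assms(1)] by (metis abs_minus_cancel snd_conv)
  have b: "\<bar>snd (frac (pt P' Q'))\<bar> = \<bar>Q'\<bar>" using frac_pt[OF assms(2)] by (metis abs_minus_cancel snd_conv)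
  show ?thesis using a b assms(3) by simp
qed

lemma ppow:
  fixes U V :: int
  assumes "prime (p::nat)" "U * V = int (p ^ k)" "U \<ge> 0" "V \<ge> 0" "coprime U V"
  shows "U = int (p^k) \<or> V = int (p^k)"
proof (cases "k = 0")
  case True
  then show ?thesis using assms by (simp add: zmult_eq_1_iff)
next
  case False
  have pi: "prime (int p)" using assms(1) by simp
  have "int p dvd U * V" using assms(2) False by (simp add: dvd_power)
  then have "int p dvd U \<or> int p dvd V" using pi prime_dvd_mult_iff by blast
  then show ?thesis
  proof
    assume h: "int p dvd U"
    have "\<not> int p dvd V" using h assms(5) pi
      by (meson coprime_common_divisor not_prime_unit)
    then have "coprime (int p) V" using pi prime_imp_coprime by blast
    then have "coprime (int (p^k)) V" by simp
    moreover have "V dvd int (p^k)" using assms(2) by (metis dvd_triv_right)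
    ultimately have "is_unit V" by (meson coprime_common_divisor dvd_refl)
    then have "V = 1" using assms(4) by simp
    then show ?thesis using assms(2) by simp
  next
    assume h: "int p dvd V"
    have "\<not> int p dvd U" using h assms(5) pi
      by (meson coprime_common_divisor not_prime_unit)
    then have "coprime (int p) U" using pi prime_imp_coprime by blast
    then have "coprime (int (p^k)) U" by simp
    moreover have "U dvd int (p^k)" using assms(2) by (metis dvd_triv_left)
    ultimately have "is_unit U" by (meson coprime_common_divisor dvd_refl)
    then have "U = 1" using assms(3) by simp
    then show ?thesis using assms(2) by simp
  qed
qed


lemma part1:
  assumes n: "n \<ge> 1" and e: "e \<in> Gamma0_orbit_I n"
  shows "e \<in> farey_edges \<and> e \<in> scaled_farey_edges n"
proof -
  obtain a b c d where det: "a*d - b*c = 1" and nc: "int n dvd c" and e: "e = {pt b d, pt a c}"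
    using orbit_iff[THEN iffD1, OF e] by blast
  obtain c' where c': "c = int n * c'" using nc by (auto simp: dvd_def)
  have dc: "\<bar>a*d - b*c\<bar> = 1" using det by simp
  have cop: "coprime a c" "coprime b d" "coprime c d" using det_cop[OF dc] by auto
  have dd: "\<bar>b*c - d*a\<bar> = 1" using det by (metis abs_minus_commute mult.commute abs_one)
  have "farey_adj (pt b d) (pt a c)"
    using adj_pt[OF nz_cop[OF cop(2)] nz_cop[OF cop(1)]] cop dd
    by (simp add: coprime_iff_gcd_eq_1)
  then have "e \<in> farey_edges" using e edge_iff by simp
  moreover have "e \<in> scaled_farey_edges n"
  proof -
    have me: "mul n ` e = {pt (int n * b) d, pt (int n * a) c}" using e mul_pt n by simp
    have cnd: "coprime (int n) d" using cop(3) unfolding c' by (simp add: coprime_mult_left_iff)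
    have g1: "gcd (int n * b) d = 1" using cnd cop(2) by (simp add: coprime_iff_gcd_eq_1[symmetric] coprime_mult_left_iff)
    have cac: "coprime a c'" using cop(1) unfolding c' by (simp add: coprime_mult_right_iff)
    have g2: "gcd (int n * a) c = int n" unfolding c' using cac gcd_mult_distrib_int[of "int n" a c']
      by (simp add: coprime_iff_gcd_eq_1)
    have nz1: "int n * b \<noteq> 0 \<or> d \<noteq> 0" using cop(2) n by auto
    have nz2: "int n * a \<noteq> 0 \<or> c \<noteq> 0" using cop(1) n by auto
    have "int n * b * c - d * (int n * a) = - int n * (a*d - b*c)" by (simp add: algebra_simps)
    then have "\<bar>int n * b * c - d * (int n * a)\<bar> = int n" using det by simp
    then have "farey_adj (pt (int n * b) d) (pt (int n * a) c)"
      using adj_pt[OF nz1 nz2] g1 g2 by simp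
    then show ?thesis using scaled_iff[OF n] me edge_iff by simp
  qed
  ultimately show ?thesis by simp
qed


lemma part2:
  assumes n: "n \<ge> 1" and pp: "prime (p0::nat)" "n = p0 ^ k"
    and e1: "e \<in> farey_edges" and e2: "e \<in> scaled_farey_edges n"
  shows "e \<in> Gamma0_orbit_I n"
proof -
  obtain x y where e: "e = {x,y}" and adj: "farey_adj x y" using e1 by (auto simp: farey_edges_def)
  obtain p q where pq: "frac x = (p,q)" by (cases "frac x")
  obtain r s where rs: "frac y = (r,s)" by (cases "frac y")
  have x: "x = pt p q" using pt_frac[of x] pq by simp
  have y: "y = pt r s" using pt_frac[of y] rs by simp
  have c1: "coprime p q" using coprime_frac[of x] pq by simp
  have c2: "coprime r s" using coprime_frac[of y] rs by simp
  have "\<bar>p*s - q*r\<bar> = 1" using adj_pt[OF nz_cop[OF c1] nz_cop[OF c2]] adj x y c1 c2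
    by (simp add: coprime_iff_gcd_eq_1)
  then have d1: "\<bar>p*s - r*q\<bar> = 1" by (simp add: mult.commute)
  have cqs: "coprime q s" using det_cop[OF d1] by simp
  have me: "mul n ` e = {pt (int n * p) q, pt (int n * r) s}" using e x y mul_pt n by simp
  have "mul n ` e \<in> farey_edges" using scaled_iff[OF n] e2 by simp
  then have adj2: "farey_adj (pt (int n * p) q) (pt (int n * r) s)" using me edge_iff by simp
  have nz1: "int n * p \<noteq> 0 \<or> q \<noteq> 0" using c1 n by auto
  have nz2: "int n * r \<noteq> 0 \<or> s \<noteq> 0" using c2 n by auto
  define U where "U = gcd (int n * p) q"
  define V where "V = gcd (int n * r) s"
  have "int n * p * s - q * (int n * r) = int n * (p*s - q*r)" by (simp add: algebra_simps)
  then have "\<bar>int n * p * s - q * (int n * r)\<bar> = int n" using \<open>\<bar>p*s - q*r\<bar> = 1\<close> by (simp add: abs_mult)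
  then have UV: "U * V = int (p0^k)" using adj_pt[OF nz1 nz2] adj2 pp(2) U_def V_def by simp
  have Uq: "U dvd q" and Vs: "V dvd s" unfolding U_def V_def by simp_all
  have cUV: "coprime U V" using cqs Uq Vs coprime_divisors by blast
  have "U = int n \<or> V = int n" using ppow[OF pp(1) UV] cUV pp(2) unfolding U_def V_def by simp
  then have "int n dvd q \<or> int n dvd s" using Uq Vs by auto
  moreover have "p*s - q*r = 1 \<or> p*s - q*r = -1" using \<open>\<bar>p*s - q*r\<bar> = 1\<close> by linarith
  moreover have m1: "pt (-p) (-q) = pt p q" "pt (-r) (-s) = pt r s"
    using pt_scale[of "-1"] by auto
  ultimately show ?thesis unfolding orbit_iff e x y
  proof (elim disjE)
    assume "int n dvd q" "p*s - q*r = 1"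
    then show "\<exists>a b c d. a*d - b*c = 1 \<and> int n dvd c \<and> {pt p q, pt r s} = {pt b d, pt a c}"
      by (intro exI[of _ p] exI[of _ r] exI[of _ q] exI[of _ s]) (auto simp: algebra_simps)
  next
    assume "int n dvd q" "p*s - q*r = -1"
    then show "\<exists>a b c d. a*d - b*c = 1 \<and> int n dvd c \<and> {pt p q, pt r s} = {pt b d, pt a c}"
      using m1 by (intro exI[of _ "-p"] exI[of _ r] exI[of _ "-q"] exI[of _ s]) (auto simp: algebra_simps)
  next
    assume "int n dvd s" "p*s - q*r = 1"
    then show "\<exists>a b c d. a*d - b*c = 1 \<and> int n dvd c \<and> {pt p q, pt r s} = {pt b d, pt a c}"
      using m1 by (intro exI[of _ "-r"] exI[of _ p] exI[of _ "-s"] exI[of _ q]) (auto simp: algebra_simps)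
  next
    assume "int n dvd s" "p*s - q*r = -1"
    then show "\<exists>a b c d. a*d - b*c = 1 \<and> int n dvd c \<and> {pt p q, pt r s} = {pt b d, pt a c}"
      by (intro exI[of _ r] exI[of _ p] exI[of _ s] exI[of _ q]) (auto simp: algebra_simps)
  qed
qed


lemma part3:
  assumes n: "n \<ge> 1" and np: "\<not> (\<exists>p k. prime p \<and> n = p ^ k)"
  shows "\<exists>e. e \<in> farey_edges \<and> e \<in> scaled_farey_edges n \<and> e \<notin> Gamma0_orbit_I n"
proof -
  have "n \<noteq> 1" using np by (metis power_0 two_is_prime_nat)
  then obtain p where p: "prime p" "p dvd n" using prime_factor_nat by blast
  define m where "m = multiplicity p n"
  define u where "u = p ^ m"
  define v where "v = n div u"
  have udvd: "u dvd n" unfolding u_def m_def by (rule multiplicity_dvd)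
  have nuv: "n = u * v" unfolding v_def using udvd by simp
  have m0: "m > 0" unfolding m_def using p n prime_multiplicity_gt_zero_iff[of p n] by simp
  have u2: "u \<ge> 2" unfolding u_def using m0 p
    by (metis One_nat_def Suc_leI le_trans power_increasing power_one_right prime_ge_2_nat prime_gt_0_nat)
  have v0: "v \<noteq> 0" using nuv n by auto
  have v1: "v \<noteq> 1" using nuv np p(1) u_def by (metis mult.right_neutral)
  have v2: "v \<ge> 2" using v0 v1 by linarith
  have "\<not> p dvd v" unfolding v_def u_def m_def
    proof (rule multiplicity_decompose)
    show "n \<noteq> 0" using n by simp
    show "\<not> is_unit p" using p(1) not_prime_unit by blast
  qed
  then have "coprime p v" using p(1) prime_imp_coprime by blast
  then have cuv: "coprime u v" unfolding u_def by simp
  then have "coprime (int u) (int v)" by simp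
  then obtain a b' where ab: "a * int v + b' * int u = 1"
    using bezout_int[of "int v" "int u"] by (metis coprime_iff_gcd_eq_1 gcd.commute)
  define b where "b = - b'"
  have det: "\<bar>a * int v - b * int u\<bar> = 1" using ab b_def by simp
  have cop: "coprime a (int u)" "coprime b (int v)" using det_cop[OF det] by auto
  define e where "e = {pt a (int u), pt b (int v)}"
  have nz1: "a \<noteq> 0 \<or> int u \<noteq> 0" and nz2: "b \<noteq> 0 \<or> int v \<noteq> 0" using u2 v2 by auto
  have "farey_adj (pt a (int u)) (pt b (int v))"
    using adj_pt[OF nz1 nz2] cop det by (simp add: coprime_iff_gcd_eq_1 mult.commute)
  then have e1: "e \<in> farey_edges" unfolding e_def using edge_iff by simp
  have me: "mul n ` e = {pt (int n * a) (int u), pt (int n * b) (int v)}" using e_def mul_pt n by simp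
  have nz3: "int n * a \<noteq> 0 \<or> int u \<noteq> 0" and nz4: "int n * b \<noteq> 0 \<or> int v \<noteq> 0" using u2 v2 by auto
  have g1: "gcd (int n * a) (int u) = int u"
    using udvd by (simp add: gcd_proj2_if_dvd_int dvd_mult2)
  have g2: "gcd (int n * b) (int v) = int v"
    using nuv by (simp add: gcd_proj2_if_dvd_int dvd_mult2)
  have "int n * a * int v - int u * (int n * b) = int n * (a * int v - b * int u)" by (simp add: algebra_simps)
  then have "\<bar>int n * a * int v - int u * (int n * b)\<bar> = int n" using det by (simp add: abs_mult)
  also have "\<dots> = gcd (int n * a) (int u) * gcd (int n * b) (int v)" using g1 g2 nuv by simp
  finally have "farey_adj (pt (int n * a) (int u)) (pt (int n * b) (int v))"
    using adj_pt[OF nz3 nz4] by simp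
  then have e2: "e \<in> scaled_farey_edges n" using scaled_iff[OF n] me edge_iff by simp
  have e3: "e \<notin> Gamma0_orbit_I n"
  proof
    assume "e \<in> Gamma0_orbit_I n"
    then obtain a' b' c' d' where det': "a'*d' - b'*c' = 1" and nc: "int n dvd c'"
      and e': "e = {pt b' d', pt a' c'}"
      using orbit_iff[THEN iffD1] by blast
    have dc: "\<bar>a'*d' - b'*c'\<bar> = 1" using det' by simp
    have ca: "coprime a' c'" using det_cop[OF dc] by auto
    have "pt a' c' \<in> e" using e' by simp
    then have "pt a' c' = pt a (int u) \<or> pt a' c' = pt b (int v)" unfolding e_def by simp
    then have "\<bar>c'\<bar> = int u \<or> \<bar>c'\<bar> = int v"
      using pt_uniq[OF ca cop(1)] pt_uniq[OF ca cop(2)] by auto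
    moreover have "c' \<noteq> 0" using calculation u2 v2 by auto
    hence "int n \<le> \<bar>c'\<bar>" using nc by (simp add: zdvd_imp_le dvd_abs_iff) 
    moreover have "u < n" "v < n" using nuv u2 v2 by auto
    ultimately show False by linarith
  qed
  show ?thesis using e1 e2 e3 by blast
qed

theorem corollary3p9:
  fixes n :: nat
  assumes "n \<ge> 1"
  shows "Gamma0_orbit_I n \<subseteq> farey_edges \<inter> scaled_farey_edges n \<and>
         (Gamma0_orbit_I n = farey_edges \<inter> scaled_farey_edges n \<longleftrightarrow>
           (\<exists>p k. prime p \<and> n = p ^ k))"
proof -
  have sub: "Gamma0_orbit_I n \<subseteq> farey_edges \<inter> scaled_farey_edges n"
    using part1[OF assms] by blast
  have "Gamma0_orbit_I n = farey_edges \<inter> scaled_farey_edges n \<longleftrightarrow> (\<exists>p k. prime p \<and> n = p ^ k)"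
  proof
    assume eq: "Gamma0_orbit_I n = farey_edges \<inter> scaled_farey_edges n"
    show "\<exists>p k. prime p \<and> n = p ^ k"
    proof (rule ccontr)
      assume "\<not> (\<exists>p k. prime p \<and> n = p ^ k)"
      from part3[OF assms this] eq show False by blast
    qed
  next
    assume "\<exists>p k. prime p \<and> n = p ^ k"
    then obtain p k where "prime p" "n = p ^ k" by blast
    then show "Gamma0_orbit_I n = farey_edges \<inter> scaled_farey_edges n"
      using sub part2[OF assms] by blast
  qed
  with sub show ?thesis by blast
qed

end
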